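(* Let $L$ be a simple $3$-connected planar graph with at least four vertices, with a fixed planar embedding, and let $r_0,r_1$ be vertices on the outer face of $L$ such that $(r_0,r_1)$ is an edge of $L$. Let $L'=L-(r_0,r_1)$ (delete the edge, keep the vertices) and let $C$ be the boundary of the outer face of $L'$, which is a simple cycle. Then every non-trivial bridge of $C$ in $L'$ has at least three vertices of attachment.
   Context: For a subgraph $H$ of a graph $G$, a vertex of attachment of $H$ is a vertex of $H$ incident with some edge of $G$ not belonging to $H$. For a cycle $J$ of $G$, a bridge of $J$ in $G$ is a subgraph $B$ of $G$ such that (1) every vertex of attachment of $B$ is a vertex of $J$, (2) $B$ is not a subgraph of $J$, and (3) no proper subgraph of $B$ has both properties (1) and (2). A bridge consisting of a single chord of $J$ is called trivial; all other bridges are non-trivial. *)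

theory Defs
  imports "HOL-Analysis.Analysis"
begin

definition simple_graph :: "'a set \<Rightarrow> 'a set set \<Rightarrow> bool" where
  "simple_graph V E \<longleftrightarrow> finite V \<and>
     (\<forall>e\<in>E. \<exists>u v. e = {u, v} \<and> u \<noteq> v \<and> u \<in> V \<and> v \<in> V)"

definition connected_graph :: "'a set \<Rightarrow> 'a set set \<Rightarrow> bool" where
  "connected_graph V E \<longleftrightarrow>
     (\<forall>u\<in>V. \<forall>v\<in>V. (\<lambda>x y. x \<in> V \<and> y \<in> V \<and> {x, y} \<in> E)\<^sup>*\<^sup>* u v)"

definition k_connected :: "nat \<Rightarrow> 'a set \<Rightarrow> 'a set set \<Rightarrow> bool" where
  "k_connected k V E \<longleftrightarrow> card V > k \<and>
     (\<forall>S\<subseteq>V. card S < k \<longrightarrow> connected_graph (V - S) {e\<in>E. e \<subseteq> V - S})"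

definition plane_embedding ::
  "'a set \<Rightarrow> 'a set set \<Rightarrow> ('a \<Rightarrow> complex) \<Rightarrow> ('a set \<Rightarrow> real \<Rightarrow> complex) \<Rightarrow> bool" where
  "plane_embedding V E pos \<gamma> \<longleftrightarrow> inj_on pos V \<and>
     (\<forall>e\<in>E. arc (\<gamma> e) \<and> {pathstart (\<gamma> e), pathfinish (\<gamma> e)} = pos ` e \<and>
             path_image (\<gamma> e) \<inter> pos ` V = pos ` e) \<and>
     (\<forall>e\<in>E. \<forall>e'\<in>E. e \<noteq> e' \<longrightarrow>
             path_image (\<gamma> e) \<inter> path_image (\<gamma> e') \<subseteq> pos ` (e \<inter> e'))"

definition drawing ::
  "'a set \<Rightarrow> 'a set set \<Rightarrow> ('a \<Rightarrow> complex) \<Rightarrow> ('a set \<Rightarrow> real \<Rightarrow> complex) \<Rightarrow> complex set" where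
  "drawing V E pos \<gamma> = pos ` V \<union> (\<Union>e\<in>E. path_image (\<gamma> e))"

definition outer_face :: "complex set \<Rightarrow> complex set" where
  "outer_face S = {x. x \<notin> S \<and> \<not> bounded (connected_component_set (- S) x)}"

definition face_boundary_vertices :: "'a set \<Rightarrow> ('a \<Rightarrow> complex) \<Rightarrow> complex set \<Rightarrow> 'a set" where
  "face_boundary_vertices V pos F = {v\<in>V. pos v \<in> frontier F}"

definition face_boundary_edges ::
  "'a set set \<Rightarrow> ('a set \<Rightarrow> real \<Rightarrow> complex) \<Rightarrow> complex set \<Rightarrow> 'a set set" where
  "face_boundary_edges E \<gamma> F = {e\<in>E. path_image (\<gamma> e) \<subseteq> frontier F}"

definition is_subgraph :: "'a set \<Rightarrow> 'a set set \<Rightarrow> 'a set \<Rightarrow> 'a set set \<Rightarrow> bool" where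
  "is_subgraph VH EH V E \<longleftrightarrow> VH \<subseteq> V \<and> EH \<subseteq> E \<and> (\<forall>e\<in>EH. e \<subseteq> VH)"

definition attachments :: "'a set \<Rightarrow> 'a set set \<Rightarrow> 'a set \<Rightarrow> 'a set set \<Rightarrow> 'a set" where
  "attachments V E VH EH = {v\<in>VH. \<exists>e\<in>E. e \<notin> EH \<and> v \<in> e}"

definition bridge_cond :: "'a set \<Rightarrow> 'a set set \<Rightarrow> 'a set \<Rightarrow> 'a set set \<Rightarrow> 'a set \<Rightarrow> 'a set set \<Rightarrow> bool" where
  "bridge_cond V E VJ EJ VB EB \<longleftrightarrow>
     attachments V E VB EB \<subseteq> VJ \<and> \<not> (VB \<subseteq> VJ \<and> EB \<subseteq> EJ)"

definition is_bridge :: "'a set \<Rightarrow> 'a set set \<Rightarrow> 'a set \<Rightarrow> 'a set set \<Rightarrow> 'a set \<Rightarrow> 'a set set \<Rightarrow> bool" where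
  "is_bridge V E VJ EJ VB EB \<longleftrightarrow> is_subgraph VB EB V E \<and> bridge_cond V E VJ EJ VB EB \<and>
     \<not> (\<exists>VB' EB'. is_subgraph VB' EB' VB EB \<and> (VB', EB') \<noteq> (VB, EB) \<and>
                 bridge_cond V E VJ EJ VB' EB')"

definition trivial_bridge :: "'a set \<Rightarrow> 'a set set \<Rightarrow> 'a set \<Rightarrow> 'a set set \<Rightarrow> bool" where
  "trivial_bridge VJ EJ VB EB \<longleftrightarrow> (\<exists>e. EB = {e} \<and> VB = e \<and> e \<notin> EJ \<and> e \<subseteq> VJ)"

end

theory Submission
  imports Defs
begin


lemma arc_closure_forward:
  fixes g :: "real \<Rightarrow> complex" and K U :: "complex set"
  assumes arc: "arc g" and clK: "closed K"
    and KP: "K \<inter> path_image g \<subseteq> {pathstart g, pathfinish g}"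
    and opO: "open U" and frO: "frontier U \<subseteq> K \<union> path_image g"
    and disO: "U \<inter> (K \<union> path_image g) = {}"
    and c: "0 < c" "c < 1" "g c \<in> closure U"
    and s: "c \<le> s" "s \<le> 1"
  shows "g s \<in> closure U"
proof (rule ccontr)
  assume bU: "g s \<notin> closure U"
  define b where "b = s"
  have pg: "path g" and inj: "inj_on g {0..1}" using arc by (auto simp: arc_def)
  have cont: "continuous_on {0..1} g" using pg by (simp add: path_def)
  define Z where "Z = {c..b} \<inter> g -` closure U"
  have cont': "continuous_on {c..b} g"
    by (rule continuous_on_subset[OF cont]) (use c s b_def in auto)
  have "closed Z" unfolding Z_def
    using continuous_closed_preimage[OF cont' closed_atLeastAtMost closed_closure] .
  moreover have "bounded Z" unfolding Z_def by (rule bounded_Int) simp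
  ultimately have cZ: "compact Z" using compact_eq_bounded_closed by blast
  have "c \<in> Z" using c s by (auto simp: Z_def b_def)
  then obtain c' where c'Z: "c' \<in> Z" and c'max: "\<forall>t\<in>Z. t \<le> c'"
    using compact_attains_sup[OF cZ] by blast
  have c'1: "c \<le> c'" "c' \<le> b" "g c' \<in> closure U" using c'Z by (auto simp: Z_def)
  have "c' \<noteq> b" using c'1 bU b_def by auto
  hence c'b: "c' < b" using c'1 by auto
  have gap: "g t \<notin> closure U" if "c' < t" "t \<le> b" for t
  proof
    assume "g t \<in> closure U"
    hence "t \<in> Z" using that c'1 by (simp add: Z_def)
    thus False using c'max that by force
  qed
  define S where "S = g ` {0..c'}"
  define T where "T = K \<union> g ` {b..1}"
  have b1: "b \<le> 1" using s b_def by simp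
  have cS: "compact S" unfolding S_def
    by (rule compact_continuous_image, rule continuous_on_subset[OF cont]) (use c'b c'1 c b1 in auto)
  have cT: "closed T" unfolding T_def
    by (intro closed_Un clK compact_imp_closed compact_continuous_image)
       (rule continuous_on_subset[OF cont], use c'b c'1 c in auto)
  have PI: "path_image g = g ` {0..1}" by (simp add: path_image_def)
  have ST: "S \<inter> T \<subseteq> {g 0}"
  proof
    fix x assume x: "x \<in> S \<inter> T"
    then obtain u where u: "u \<in> {0..c'}" "x = g u" by (auto simp: S_def)
    have u01: "u \<in> {0..1}" using u c'b b1 by auto
    show "x \<in> {g 0}"
    proof (cases "x \<in> K")
      case True
      hence "x \<in> {g 0, g 1}" using KP u u01 PI by (auto simp: pathstart_def pathfinish_def)
      moreover have "x \<noteq> g 1"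
      proof
        assume "x = g 1"
        hence "u = 1" using inj_onD[OF inj, of u 1] u u01 by auto
        thus False using u c'b b1 by auto
      qed
      ultimately show ?thesis by auto
    next
      case False
      then obtain v where v: "v \<in> {b..1}" "x = g v" using x by (auto simp: T_def)
      have "u = v" using inj_onD[OF inj, of u v] u v u01 c'b c by auto
      thus ?thesis using u v c'b by auto
    qed
  qed
  have conST: "connected (S \<inter> T)"
    using ST by (metis connected_empty connected_sing subset_singletonD)
  have gc'T: "g c' \<notin> T"
  proof
    assume "g c' \<in> T"
    moreover have "c' \<in> {0..1}" using c'1 c c'b b1 by auto
    moreover have "0 < c'" "c' < 1" using c'1 c c'b b1 by auto
    ultimately show False
    proof (cases "g c' \<in> K")
      case True
      hence "g c' \<in> {g 0, g 1}" using KP \<open>c' \<in> {0..1}\<close> PI by (auto simp: pathstart_def pathfinish_def)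
      thus False using inj_onD[OF inj, of c' 0] inj_onD[OF inj, of c' 1] \<open>c' \<in> {0..1}\<close> \<open>0 < c'\<close> \<open>c' < 1\<close> by auto
    next
      case False
      then obtain v where v: "v \<in> {b..1}" "g c' = g v" using \<open>g c' \<in> T\<close> by (auto simp: T_def)
      have "c' = v" using inj_onD[OF inj, of c' v] v \<open>c' \<in> {0..1}\<close> c'b c by auto
      thus False using v c'b by auto
    qed
  qed
  obtain r where r: "r > 0" "ball (g c') r \<inter> T = {}"
  proof -
    have "open (- T)" using cT by (simp add: open_Compl)
    moreover have "g c' \<in> - T" using gc'T by simp
    ultimately obtain r where "r > 0" "ball (g c') r \<subseteq> - T"
      using open_contains_ball by blast
    thus ?thesis using that by blast
  qed
  obtain p where p: "p \<in> U" "dist p (g c') < r"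
    using c'1(3) r(1) unfolding closure_approachable by blast
  have "continuous (at c' within {0..1}) g"
    using cont c'1 c c'b b1 by (simp add: continuous_on_eq_continuous_within)
  then obtain d where d: "d > 0" "\<forall>t\<in>{0..1}. dist t c' < d \<longrightarrow> dist (g t) (g c') < r"
    using r(1) unfolding continuous_within_eps_delta by blast
  define t1 where "t1 = min (c' + d/2) b"
  have t1: "c' < t1" "t1 \<le> b" "t1 \<in> {0..1}" using d c'b c'1 c b1 by (auto simp: t1_def)
  have "dist t1 c' < d" using d t1 by (auto simp: t1_def dist_real_def)
  hence gt1: "dist (g t1) (g c') < r" using d t1 by blast
  have gt1U: "g t1 \<notin> closure U" using gap t1 by auto
  have ccS: "connected_component (- S) p (g t1)"
  proof -
    have "c' \<in> {0..1}" "(0::real) \<in> {0..1}" "0 \<noteq> c'" using c'1 c c'b b1 by auto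
    hence "arc (subpath 0 c' g)" using arc_subpath_arc arc by blast
    moreover have "path_image (subpath 0 c' g) = S" using c'1 c by (simp add: path_image_subpath S_def)
    ultimately have "connected (- S)" by (metis connected_arc_complement DIM_complex order_refl)
    moreover have "p \<notin> S" using p disO PI c'b b1 by (auto simp: S_def)
    moreover have "g t1 \<notin> S"
    proof
      assume "g t1 \<in> S"
      then obtain u where "u \<in> {0..c'}" "g t1 = g u" by (auto simp: S_def)
      hence "u = t1" using inj_onD[OF inj, of u t1] t1 c'b b1 by auto
      thus False using \<open>u \<in> {0..c'}\<close> t1 by auto
    qed
    ultimately show ?thesis unfolding connected_component_def by blast
  qed
  have ccT: "connected_component (- T) p (g t1)"
    unfolding connected_component_def
    by (rule exI[of _ "ball (g c') r"]) (use r p gt1 in \<open>auto simp: dist_commute\<close>)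
  have "connected_component (- (S \<union> T)) p (g t1)"
    by (rule Janiszewski[OF cS cT conST ccS ccT])
  then obtain Cc where Cc: "connected Cc" "Cc \<subseteq> - (S \<union> T)" "p \<in> Cc" "g t1 \<in> Cc"
    unfolding connected_component_def by blast
  have "g t1 \<in> path_image g" using t1 PI by auto
  hence "g t1 \<notin> U" using disO by auto
  hence "Cc \<inter> frontier U \<noteq> {}"
    using connected_Int_frontier[OF Cc(1)] Cc p by blast
  then obtain z where z: "z \<in> Cc" "z \<in> frontier U" by blast
  have "z \<notin> K" using z Cc by (auto simp: T_def)
  hence "z \<in> path_image g" using frO z by auto
  then obtain v where v: "v \<in> {0..1}" "z = g v" using PI by auto
  have "v > c'" using z Cc v by (force simp: S_def)
  moreover have "v < b" using z Cc v by (force simp: T_def)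
  ultimately have "z \<notin> closure U" using gap v by auto
  thus False using z frontier_def by auto
qed



lemma arc_closure_whole:
  fixes g :: "real \<Rightarrow> complex" and K U :: "complex set"
  assumes arc: "arc g" and clK: "closed K"
    and KP: "K \<inter> path_image g \<subseteq> {pathstart g, pathfinish g}"
    and opU: "open U" and frU: "frontier U \<subseteq> K \<union> path_image g"
    and disU: "U \<inter> (K \<union> path_image g) = {}"
    and c: "0 < c" "c < 1" "g c \<in> closure U"
  shows "path_image g \<subseteq> closure U"
proof
  fix x assume "x \<in> path_image g"
  then obtain s where s: "s \<in> {0..1}" "x = g s" by (auto simp: path_image_def)
  show "x \<in> closure U"
  proof (cases "c \<le> s")
    case True
    thus ?thesis using arc_closure_forward[OF arc clK KP opU frU disU c True] s by auto
  next
    case False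
    have arc': "arc (reversepath g)" using arc by (simp add: arc_reversepath)
    have KP': "K \<inter> path_image (reversepath g) \<subseteq> {pathstart (reversepath g), pathfinish (reversepath g)}"
      using KP by auto
    have "reversepath g (1 - c) \<in> closure U" using c by (simp add: reversepath_def)
    hence "reversepath g (1 - s) \<in> closure U"
      using arc_closure_forward[OF arc' clK KP' opU _ _ _ _ _, of "1 - c" "1 - s"] frU disU c False s
      by auto
    thus ?thesis using s by (simp add: reversepath_def)
  qed
qed

lemma outer_face_open:
  assumes "closed D" shows "open (outer_face D)"
proof (subst open_subopen, intro ballI)
  fix x assume x: "x \<in> outer_face D"
  let ?C = "connected_component_set (- D) x"
  have "open ?C" using assms by (simp add: open_Compl open_connected_component)
  moreover have "x \<in> ?C" using x by (simp add: outer_face_def)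
  moreover have "?C \<subseteq> outer_face D"
  proof
    fix y assume y: "y \<in> ?C"
    hence "connected_component_set (- D) y = ?C" by (rule connected_component_eq)
    moreover have "y \<notin> D" using y connected_component_in by blast
    ultimately show "y \<in> outer_face D" using x by (simp add: outer_face_def)
  qed
  ultimately show "\<exists>T. open T \<and> x \<in> T \<and> T \<subseteq> outer_face D" by blast
qed

lemma outer_face_disj: "outer_face D \<inter> D = {}"
  by (auto simp: outer_face_def)

lemma outer_face_frontier:
  assumes cl: "closed D" shows "frontier (outer_face D) \<subseteq> D"
proof
  fix x assume x: "x \<in> frontier (outer_face D)"
  show "x \<in> D"
  proof (rule ccontr)
    assume xD: "x \<notin> D"
    let ?C = "connected_component_set (- D) x"
    have oC: "open ?C" using cl by (simp add: open_Compl open_connected_component)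
    have xC: "x \<in> ?C" using xD by simp
    obtain r where r: "r > 0" "ball x r \<subseteq> ?C" using oC xC open_contains_ball by blast
    have "x \<in> closure (outer_face D)" using x by (simp add: frontier_def)
    then obtain y where y: "y \<in> outer_face D" "dist y x < r"
      using r(1) unfolding closure_approachable by blast
    have "y \<in> ?C" using y r by (auto simp: dist_commute)
    hence "connected_component_set (- D) y = ?C" by (rule connected_component_eq)
    hence "x \<in> outer_face D" using y xD by (simp add: outer_face_def)
    hence "x \<in> interior (outer_face D)" using outer_face_open[OF cl] by (simp add: interior_open)
    thus False using x by (simp add: frontier_def)
  qed
qed

lemma outer_face_mono:
  assumes "D' \<subseteq> D" shows "outer_face D \<subseteq> outer_face D'"
proof
  fix x assume x: "x \<in> outer_face D"
  have "connected_component_set (- D) x \<subseteq> connected_component_set (- D') x"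
    using assms by (intro connected_component_mono) auto
  thus "x \<in> outer_face D'" using x assms by (auto simp: outer_face_def dest: bounded_subset)
qed



lemma simple_graph_finite_E:
  assumes "simple_graph V E" shows "finite E" "\<And>e. e \<in> E \<Longrightarrow> e \<subseteq> V"
proof -
  show sub: "\<And>e. e \<in> E \<Longrightarrow> e \<subseteq> V" using assms by (fastforce simp: simple_graph_def)
  have "E \<subseteq> Pow V" using sub by auto
  moreover have "finite V" using assms by (simp add: simple_graph_def)
  ultimately show "finite E" by (meson finite_Pow_iff finite_subset)
qed

lemma drawing_closed:
  assumes sg: "simple_graph V E" and pe: "plane_embedding V E pos \<gamma>"
  shows "closed (drawing V E pos \<gamma>)"
proof -
  have fV: "finite V" using sg by (simp add: simple_graph_def)
  have fE: "finite E" using simple_graph_finite_E[OF sg] by simp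
  have "\<forall>e\<in>E. compact (path_image (\<gamma> e))"
    using pe by (auto simp: plane_embedding_def arc_imp_path compact_path_image)
  hence "compact (\<Union>e\<in>E. path_image (\<gamma> e))" using fE by (intro compact_UN) auto
  moreover have "compact (pos ` V)" using fV by (simp add: finite_imp_compact)
  ultimately show ?thesis unfolding drawing_def by (intro closed_Un compact_imp_closed)
qed

lemma vertex_edge_frontier:
  assumes sg: "simple_graph V E" and pe: "plane_embedding V E pos \<gamma>"
    and u: "u \<in> V" and e0: "e0 \<in> E" "u \<in> e0"
    and fr: "pos u \<in> frontier (outer_face (drawing V E pos \<gamma>))"
  shows "\<exists>e\<in>E. u \<in> e \<and> path_image (\<gamma> e) \<subseteq> frontier (outer_face (drawing V E pos \<gamma>))"
proof -
  define D where "D = drawing V E pos \<gamma>"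
  define U where "U = outer_face D"
  have fV: "finite V" using sg by (simp add: simple_graph_def)
  have fE: "finite E" and eV: "\<And>e. e \<in> E \<Longrightarrow> e \<subseteq> V" using simple_graph_finite_E[OF sg] by auto
  have clD: "closed D" using drawing_closed[OF sg pe] by (simp add: D_def)
  have opU: "open U" using outer_face_open[OF clD] by (simp add: U_def)
  have frU: "frontier U \<subseteq> D" using outer_face_frontier[OF clD] by (simp add: U_def)
  have disU: "U \<inter> D = {}" using outer_face_disj by (simp add: U_def)
  have inj: "inj_on pos V" using pe by (simp add: plane_embedding_def)
  have arcs: "\<And>e. e \<in> E \<Longrightarrow> arc (\<gamma> e)" using pe by (simp add: plane_embedding_def)
  have ends: "\<And>e. e \<in> E \<Longrightarrow> {pathstart (\<gamma> e), pathfinish (\<gamma> e)} = pos ` e"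
    using pe by (simp add: plane_embedding_def)
  have vert: "\<And>e. e \<in> E \<Longrightarrow> path_image (\<gamma> e) \<inter> pos ` V = pos ` e"
    using pe by (simp add: plane_embedding_def)
  have cross: "\<And>e e'. e \<in> E \<Longrightarrow> e' \<in> E \<Longrightarrow> e \<noteq> e' \<Longrightarrow>
      path_image (\<gamma> e) \<inter> path_image (\<gamma> e') \<subseteq> pos ` (e \<inter> e')"
    using pe unfolding plane_embedding_def by blast
  have posinV: "\<And>e. e \<in> E \<Longrightarrow> pos ` e \<subseteq> path_image (\<gamma> e)"
  proof -
    fix e assume "e \<in> E"
    hence "pos ` e = {pathstart (\<gamma> e), pathfinish (\<gamma> e)}" using ends by simp
    thus "pos ` e \<subseteq> path_image (\<gamma> e)" by auto
  qed
  define K0 where "K0 = pos ` (V - {u}) \<union> (\<Union>e\<in>{e\<in>E. u \<notin> e}. path_image (\<gamma> e))"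
  have cK0: "closed K0"
  proof -
    have "\<forall>e\<in>{e\<in>E. u \<notin> e}. compact (path_image (\<gamma> e))"
      using arcs by (auto simp: arc_imp_path compact_path_image)
    hence "compact (\<Union>e\<in>{e\<in>E. u \<notin> e}. path_image (\<gamma> e))" using fE by (intro compact_UN) auto
    moreover have "compact (pos ` (V - {u}))" using fV by (simp add: finite_imp_compact)
    ultimately show ?thesis unfolding K0_def by (intro closed_Un compact_imp_closed)
  qed
  have uK0: "pos u \<notin> K0"
  proof
    assume "pos u \<in> K0"
    then consider "pos u \<in> pos ` (V - {u})" | e where "e \<in> E" "u \<notin> e" "pos u \<in> path_image (\<gamma> e)"
      unfolding K0_def by blast
    thus False
    proof cases
      case 1
      then obtain v where "v \<in> V" "v \<noteq> u" "pos v = pos u" by (metis DiffE imageE singletonI)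
      thus False using inj u by (metis inj_onD)
    next
      case 2
      hence "pos u \<in> pos ` e" using vert[of e] u by blast
      then obtain v where "v \<in> e" "pos v = pos u" by auto
      thus False using inj u eV[OF 2(1)] 2(2) by (metis inj_onD subsetD)
    qed
  qed
  obtain \<epsilon> where eps: "\<epsilon> > 0" "ball (pos u) \<epsilon> \<subseteq> - K0"
    using cK0 uK0 open_contains_ball[of "- K0"] by (auto simp: open_Compl)
  have "pos u \<in> closure U" using fr by (simp add: frontier_def U_def D_def)
  then obtain q where q: "q \<in> U" "dist q (pos u) < \<epsilon>"
    using eps(1) unfolding closure_approachable by blast
  define \<rho> where "\<rho> = dist (pos u) q"
  have uD: "pos u \<in> D" using u by (simp add: D_def drawing_def)
  have "q \<noteq> pos u" using q uD disU by auto
  hence rho: "\<rho> > 0" "\<rho> < \<epsilon>" using q by (auto simp: \<rho>_def dist_commute)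
  obtain x where x: "x \<in> e0" "x \<noteq> u"
    using sg e0 unfolding simple_graph_def by blast
  have xV: "x \<in> V" using x eV e0 by blast
  have xK0: "pos x \<in> K0" using xV x by (simp add: K0_def)
  have "dist (pos u) (pos x) \<ge> \<epsilon>"
  proof (rule ccontr)
    assume "\<not> ?thesis"
    hence "pos x \<in> ball (pos u) \<epsilon>" by simp
    thus False using eps xK0 by auto
  qed
  hence pxc: "pos x \<notin> cball (pos u) \<rho>" using rho by auto
  have "path_image (\<gamma> e0) \<inter> frontier (cball (pos u) \<rho>) \<noteq> {}"
  proof (rule connected_Int_frontier)
    show "connected (path_image (\<gamma> e0))" using arcs[OF e0(1)] by (simp add: arc_imp_path connected_path_image)
    show "path_image (\<gamma> e0) \<inter> cball (pos u) \<rho> \<noteq> {}" using posinV[OF e0(1)] e0 rho by force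
    show "path_image (\<gamma> e0) - cball (pos u) \<rho> \<noteq> {}" using posinV[OF e0(1)] x pxc by force
  qed
  then obtain y where y: "y \<in> path_image (\<gamma> e0)" "y \<in> frontier (cball (pos u) \<rho>)" by blast
  have "y \<in> D" using y e0 by (auto simp: D_def drawing_def)
  hence yU: "y \<notin> U" using disU by auto
  have "sphere (pos u) \<rho> \<inter> frontier U \<noteq> {}"
  proof (rule connected_Int_frontier)
    show "connected (sphere (pos u) \<rho>)" by (rule connected_sphere) simp
    show "sphere (pos u) \<rho> \<inter> U \<noteq> {}" using q by (auto simp: \<rho>_def)
    show "sphere (pos u) \<rho> - U \<noteq> {}" using y yU by auto
  qed
  then obtain z where z: "z \<in> sphere (pos u) \<rho>" "z \<in> frontier U" by blast
  have zD: "z \<in> D" using z frU by auto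
  have zball: "z \<in> ball (pos u) \<epsilon>" using z rho by auto
  hence zK0: "z \<notin> K0" using eps by auto
  have zu: "z \<noteq> pos u" using z rho by auto
  have zV: "z \<notin> pos ` V"
  proof
    assume "z \<in> pos ` V"
    then obtain v where "v \<in> V" "z = pos v" by auto
    thus False using zu zK0 by (cases "v = u") (auto simp: K0_def)
  qed
  then obtain e where e: "e \<in> E" "z \<in> path_image (\<gamma> e)" using zD by (auto simp: D_def drawing_def)
  have ue: "u \<in> e" using e zK0 by (auto simp: K0_def)
  obtain t where t: "t \<in> {0..1}" "z = \<gamma> e t" using e by (auto simp: path_image_def)
  have "\<gamma> e 0 \<in> pos ` V" using ends[OF e(1)] eV[OF e(1)] by (auto simp: pathstart_def)
  hence t0: "t \<noteq> 0" using zV t by auto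
  have "\<gamma> e 1 \<in> pos ` V" using ends[OF e(1)] eV[OF e(1)] by (auto simp: pathfinish_def)
  hence t1: "t \<noteq> 1" using zV t by auto
  define K where "K = pos ` V \<union> (\<Union>e'\<in>E - {e}. path_image (\<gamma> e'))"
  have cK: "closed K"
  proof -
    have "\<forall>e\<in>E - {e}. compact (path_image (\<gamma> e))"
      using arcs by (auto simp: arc_imp_path compact_path_image)
    hence "compact (\<Union>e'\<in>E - {e}. path_image (\<gamma> e'))" using fE by (intro compact_UN) auto
    moreover have "compact (pos ` V)" using fV by (simp add: finite_imp_compact)
    ultimately show ?thesis unfolding K_def by (intro closed_Un compact_imp_closed)
  qed
  have DK: "D = K \<union> path_image (\<gamma> e)" using e(1) by (auto simp: D_def drawing_def K_def)
  have KP: "K \<inter> path_image (\<gamma> e) \<subseteq> {pathstart (\<gamma> e), pathfinish (\<gamma> e)}"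
  proof
    fix w assume w: "w \<in> K \<inter> path_image (\<gamma> e)"
    have "w \<in> pos ` e"
    proof (cases "w \<in> pos ` V")
      case True thus ?thesis using vert[OF e(1)] w by blast
    next
      case False
      then obtain e' where "e' \<in> E" "e' \<noteq> e" "w \<in> path_image (\<gamma> e')" using w by (auto simp: K_def)
      thus ?thesis using cross[OF e(1) \<open>e' \<in> E\<close>] w by blast
    qed
    thus "w \<in> {pathstart (\<gamma> e), pathfinish (\<gamma> e)}" using ends[OF e(1)] by simp
  qed
  have "\<gamma> e t \<in> closure U" using z t frontier_def by (auto simp: closure_def frontier_def)
  hence "path_image (\<gamma> e) \<subseteq> closure U"
    using arc_closure_whole[OF arcs[OF e(1)] cK KP opU _ _, of t] frU disU DK t t0 t1 by auto
  moreover have "path_image (\<gamma> e) \<inter> U = {}" using disU DK by auto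
  ultimately have "path_image (\<gamma> e) \<subseteq> frontier U"
    using opU by (auto simp: frontier_def interior_open)
  thus ?thesis using e ue by (auto simp: U_def D_def)
qed



lemma other_edge:
  assumes sg: "simple_graph V E" and kc: "k_connected 3 V E" and c4: "card V \<ge> 4"
    and a: "a \<in> V" and b: "b \<in> V" and ab: "a \<noteq> b"
  shows "\<exists>y. {a, y} \<in> E - {{a, b}}"
proof -
  have fV: "finite V" using sg by (simp add: simple_graph_def)
  have "card {b} < 3" by simp
  hence conn: "connected_graph (V - {b}) {e\<in>E. e \<subseteq> V - {b}}"
    using kc b by (simp add: k_connected_def)
  have "card (V - {b}) \<ge> 3" using c4 b fV by (simp add: card_Diff_singleton)
  hence "card (V - {b} - {a}) \<ge> 2" using a ab fV by (simp add: card_Diff_singleton)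
  hence "V - {b} - {a} \<noteq> {}" by (metis card.empty not_numeral_le_zero)
  then obtain v where v: "v \<in> V" "v \<noteq> b" "v \<noteq> a" by blast
  let ?R = "\<lambda>x y. x \<in> V - {b} \<and> y \<in> V - {b} \<and> {x, y} \<in> {e\<in>E. e \<subseteq> V - {b}}"
  have "\<forall>x\<in>V - {b}. \<forall>z\<in>V - {b}. ?R\<^sup>*\<^sup>* x z" using conn by (simp only: connected_graph_def)
  moreover have "a \<in> V - {b}" "v \<in> V - {b}" using a ab v by auto
  ultimately have rr: "?R\<^sup>*\<^sup>* a v" by blast
  obtain y where y: "?R a y"
    using rr
  proof (cases rule: converse_rtranclpE)
    case base thus ?thesis using v(3) by simp
  next
    case (step y) thus ?thesis using that by blast
  qed
  have "{a, y} \<noteq> {a, b}"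
  proof
    assume "{a, y} = {a, b}"
    hence "b \<in> {a, y}" by blast
    thus False using y ab by auto
  qed
  thus ?thesis using y by blast
qed

lemma claim2_main:
  fixes V :: "'a set" and E :: "'a set set" and pos :: "'a \<Rightarrow> complex"
    and \<gamma> :: "'a set \<Rightarrow> real \<Rightarrow> complex" and r0 r1 :: 'a
  assumes sg: "simple_graph V E" and kc: "k_connected 3 V E" and c4: "card V \<ge> 4"
    and pe: "plane_embedding V E pos \<gamma>"
    and r0: "r0 \<in> V" and r1: "r1 \<in> V" and r01E: "{r0, r1} \<in> E"
    and fr0: "pos r0 \<in> frontier (outer_face (drawing V E pos \<gamma>))"
    and fr1: "pos r1 \<in> frontier (outer_face (drawing V E pos \<gamma>))"
    and E'_def: "E' = E - {{r0, r1}}"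
    and U_def: "U = outer_face (drawing V E' pos \<gamma>)"
    and VJ_def: "VJ = face_boundary_vertices V pos U"
    and EJ_def: "EJ = face_boundary_edges E' \<gamma> U"
    and br: "is_bridge V E' VJ EJ VB EB"
    and nt: "\<not> trivial_bridge VJ EJ VB EB"
  shows "card (attachments V E' VB EB) \<ge> 3"
proof (rule ccontr)
  define A where "A = attachments V E' VB EB"
  assume "\<not> card (attachments V E' VB EB) \<ge> 3"
  hence cA: "card A < 3" by (simp add: A_def)
  have fV: "finite V" using sg by (simp add: simple_graph_def)
  have eV: "\<And>e. e \<in> E \<Longrightarrow> e \<subseteq> V" using simple_graph_finite_E[OF sg] by auto
  have r01: "r0 \<noteq> r1"
  proof
    assume "r0 = r1"
    hence "{r0} \<in> E" using r01E by simp
    then obtain a b where "{r0} = {a, b}" "a \<noteq> b" using sg unfolding simple_graph_def by blast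
    thus False by (metis insertI1 insert_commute singletonD)
  qed
  have sg': "simple_graph V E'" using sg by (auto simp: simple_graph_def E'_def)
  have pe': "plane_embedding V E' pos \<gamma>" using pe by (auto simp: plane_embedding_def E'_def)
  have E'E: "E' \<subseteq> E" by (auto simp: E'_def)
  have eV': "\<And>e. e \<in> E' \<Longrightarrow> e \<subseteq> V" using eV E'E by blast
  have onb: "pos r \<in> frontier U" if r: "r \<in> V" and frr: "pos r \<in> frontier (outer_face (drawing V E pos \<gamma>))" for r
  proof -
    have "drawing V E' pos \<gamma> \<subseteq> drawing V E pos \<gamma>" using E'E by (auto simp: drawing_def)
    hence "outer_face (drawing V E pos \<gamma>) \<subseteq> U" unfolding U_def by (rule outer_face_mono)
    hence "closure (outer_face (drawing V E pos \<gamma>)) \<subseteq> closure U" by (rule closure_mono)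
    moreover have "pos r \<in> closure (outer_face (drawing V E pos \<gamma>))" using frr by (simp add: frontier_def)
    ultimately have "pos r \<in> closure U" by blast
    moreover have "pos r \<notin> U" using r outer_face_disj[of "drawing V E' pos \<gamma>"]
      by (auto simp: U_def drawing_def)
    moreover have "open U" unfolding U_def by (rule outer_face_open[OF drawing_closed[OF sg' pe']])
    ultimately show ?thesis by (simp add: frontier_def interior_open)
  qed
  have EJsub: "e \<subseteq> VJ" if "e \<in> EJ" for e
  proof
    fix v assume v: "v \<in> e"
    have eE: "e \<in> E'" and pimg: "path_image (\<gamma> e) \<subseteq> frontier U"
      using that by (auto simp: EJ_def face_boundary_edges_def)
    have "{pathstart (\<gamma> e), pathfinish (\<gamma> e)} = pos ` e" using pe' eE by (simp add: plane_embedding_def)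
    moreover have "pos v \<in> pos ` e" using v by simp
    ultimately have "pos v \<in> {pathstart (\<gamma> e), pathfinish (\<gamma> e)}" by simp
    hence "pos v \<in> path_image (\<gamma> e)" using pathstart_in_path_image pathfinish_in_path_image by auto
    thus "v \<in> VJ" using pimg eV'[OF eE] v by (auto simp: VJ_def face_boundary_vertices_def)
  qed
  have EJE': "EJ \<subseteq> E'" by (auto simp: EJ_def face_boundary_edges_def)
  have EJedge: "\<exists>e\<in>EJ. r \<in> e" if r: "r \<in> V" "pos r \<in> frontier (outer_face (drawing V E pos \<gamma>))"
      and r': "r' \<in> V" "r \<noteq> r'" "{r, r'} = {r0, r1}" for r r'
  proof -
    obtain y where y: "{r, y} \<in> E - {{r, r'}}" using other_edge[OF sg kc c4 r(1) r'(1) r'(2)] by blast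
    hence yE': "{r, y} \<in> E'" using r' by (simp add: E'_def)
    have "pos r \<in> frontier U" using onb r by blast
    hence "\<exists>e\<in>E'. r \<in> e \<and> path_image (\<gamma> e) \<subseteq> frontier (outer_face (drawing V E' pos \<gamma>))"
      using vertex_edge_frontier[OF sg' pe' r(1) yE'] by (simp add: U_def)
    thus ?thesis by (auto simp: EJ_def face_boundary_edges_def U_def)
  qed
  obtain e0 where e0: "e0 \<in> EJ" "r0 \<in> e0" using EJedge[OF r0 fr0 r1 r01] by auto
  obtain e1 where e1: "e1 \<in> EJ" "r1 \<in> e1" using EJedge[OF r1 fr1 r0 r01[symmetric]] by (auto simp: insert_commute)
  have e0E: "e0 \<in> E'" using e0 EJE' by blast
  then obtain a b where ab: "e0 = {a, b}" "a \<noteq> b" using sg' unfolding simple_graph_def by blast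
  obtain x where x: "x \<in> e0" "x \<noteq> r0" using ab by blast
  have e0x: "e0 = {r0, x}" using ab x e0 by auto
  have xr1: "x \<noteq> r1" using e0x e0E by (auto simp: E'_def)
  have xV: "x \<in> V" using eV' e0E x by blast
  have sub: "is_subgraph VB EB V E'" and bc: "bridge_cond V E' VJ EJ VB EB"
    and minl: "\<And>VB' EB'. is_subgraph VB' EB' VB EB \<Longrightarrow> (VB', EB') \<noteq> (VB, EB) \<Longrightarrow>
        \<not> bridge_cond V E' VJ EJ VB' EB'"
  proof -
    have "is_subgraph VB EB V E' \<and> bridge_cond V E' VJ EJ VB EB \<and>
     \<not> (\<exists>VB' EB'. is_subgraph VB' EB' VB EB \<and> (VB', EB') \<noteq> (VB, EB) \<and>
                 bridge_cond V E' VJ EJ VB' EB')" using br unfolding is_bridge_def by assumption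
    note H = this
    show "is_subgraph VB EB V E'" using H by (rule conjunct1)
    show "bridge_cond V E' VJ EJ VB EB" using H by blast
    show "\<And>VB' EB'. is_subgraph VB' EB' VB EB \<Longrightarrow> (VB', EB') \<noteq> (VB, EB) \<Longrightarrow>
        \<not> bridge_cond V E' VJ EJ VB' EB'" using H by blast
  qed
  have AJ: "A \<subseteq> VJ" using bc by (simp add: bridge_cond_def A_def)
  have AVB: "A \<subseteq> VB" by (auto simp: A_def attachments_def)
  have VBV: "VB \<subseteq> V" and EBE: "EB \<subseteq> E'" and EBVB: "\<And>e. e \<in> EB \<Longrightarrow> e \<subseteq> VB"
    using sub by (auto simp: is_subgraph_def)
  have notJ: "\<not> (VB \<subseteq> VJ \<and> EB \<subseteq> EJ)" using bc by (simp add: bridge_cond_def)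
  have step1: "EB \<inter> EJ = {}"
  proof (rule ccontr)
    assume ne: "EB \<inter> EJ \<noteq> {}"
    have "is_subgraph VB (EB - EJ) VB EB" using EBVB by (auto simp: is_subgraph_def)
    moreover have "(VB, EB - EJ) \<noteq> (VB, EB)" using ne by auto
    moreover have "bridge_cond V E' VJ EJ VB (EB - EJ)"
    proof -
      have "attachments V E' VB (EB - EJ) \<subseteq> VJ"
      proof
        fix v assume "v \<in> attachments V E' VB (EB - EJ)"
        then obtain e where e: "v \<in> VB" "e \<in> E'" "e \<notin> EB - EJ" "v \<in> e" by (auto simp: attachments_def)
        show "v \<in> VJ"
        proof (cases "e \<in> EJ")
          case True thus ?thesis using EJsub e by blast
        next
          case False
          hence "v \<in> A" using e by (auto simp: A_def attachments_def)
          thus ?thesis using AJ by blast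
        qed
      qed
      moreover have "\<not> (VB \<subseteq> VJ \<and> EB - EJ \<subseteq> EJ)" using notJ by blast
      ultimately show ?thesis by (simp add: bridge_cond_def)
    qed
    ultimately show False using minl by metis
  qed
  have step2: "\<exists>v\<in>VB. v \<notin> VJ"
  proof (rule ccontr)
    assume "\<not> ?thesis"
    hence VBJ: "VB \<subseteq> VJ" by blast
    then obtain f where f: "f \<in> EB" "f \<notin> EJ" using notJ by blast
    have fVB: "f \<subseteq> VB" using EBVB f by blast
    have "is_subgraph f {f} VB EB" using fVB f by (auto simp: is_subgraph_def)
    moreover have "bridge_cond V E' VJ EJ f {f}"
      using fVB VBJ f by (auto simp: bridge_cond_def attachments_def)
    ultimately have "(f, {f}) = (VB, EB)" using minl by metis
    hence "trivial_bridge VJ EJ VB EB" using f fVB VBJ by (auto simp: trivial_bridge_def)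
    thus False using nt by blast
  qed
  then obtain v where v: "v \<in> VB" "v \<notin> VJ" by blast
  have inA: "u \<in> A" if "u \<in> VB" "e \<in> EJ" "u \<in> e" for u e
  proof -
    have "e \<in> E'" "e \<notin> EB" using that step1 EJE' by auto
    thus ?thesis using that unfolding A_def attachments_def by blast
  qed
  have "\<not> ({r0, r1, x} \<subseteq> VB)"
  proof
    assume H: "{r0, r1, x} \<subseteq> VB"
    have "r0 \<in> A" using inA[OF _ e0(1) e0(2)] H by simp
    moreover have "r1 \<in> A" using inA[OF _ e1(1) e1(2)] H by simp
    moreover have "x \<in> A" using inA[OF _ e0(1) x(1)] H by simp
    ultimately have sA: "{r0, r1, x} \<subseteq> A" by simp
    have "finite A" using AVB VBV fV by (meson finite_subset)
    hence "card {r0, r1, x} \<le> card A" using sA by (simp add: card_mono)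
    moreover have "card {r0, r1, x} = 3" using r01 x(2) xr1 by simp
    ultimately show False using cA by simp
  qed
  then obtain w where w: "w \<in> {r0, r1, x}" "w \<notin> VB" by (meson subsetI)
  have wV: "w \<in> V" using w r0 r1 xV by auto
  have AV: "A \<subseteq> V" using AVB VBV by blast
  have conn: "connected_graph (V - A) {e\<in>E. e \<subseteq> V - A}" using kc AV cA by (simp add: k_connected_def)
  let ?R = "\<lambda>x y. x \<in> V - A \<and> y \<in> V - A \<and> {x, y} \<in> {e\<in>E. e \<subseteq> V - A}"
  have "\<forall>x\<in>V - A. \<forall>z\<in>V - A. ?R\<^sup>*\<^sup>* x z" using conn by (simp only: connected_graph_def)
  moreover have "v \<in> V - A" using v VBV AJ by blast
  moreover have "w \<in> V - A" using w wV AVB by blast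
  ultimately have rr: "?R\<^sup>*\<^sup>* v w" by blast
  have r0A: "r0 \<in> VB \<Longrightarrow> r0 \<in> A" using inA e0 by blast
  have r1A: "r1 \<in> VB \<Longrightarrow> r1 \<in> A" using inA e1 by blast
  have "w \<in> VB"
    using rr
  proof (induction rule: rtranclp_induct)
    case base thus ?case using v by simp
  next
    case (step y z)
    have yA: "y \<notin> A" and yzE: "{y, z} \<in> E" using step.hyps(2) by auto
    have "{y, z} \<noteq> {r0, r1}"
    proof
      assume "{y, z} = {r0, r1}"
      hence "y = r0 \<or> y = r1" by (metis doubleton_eq_iff)
      thus False using r0A r1A step.IH yA by blast
    qed
    hence yzE': "{y, z} \<in> E'" using yzE by (simp add: E'_def)
    have "{y, z} \<in> EB"
    proof (rule ccontr)
      assume "{y, z} \<notin> EB"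
      hence "y \<in> A" using step.IH yzE' by (auto simp: A_def attachments_def)
      thus False using yA by simp
    qed
    thus ?case using EBVB by blast
  qed
  thus False using w by simp
qed


theorem claim2:
  fixes V :: "'a set" and E :: "'a set set" and pos :: "'a \<Rightarrow> complex"
    and \<gamma> :: "'a set \<Rightarrow> real \<Rightarrow> complex" and r0 r1 :: 'a
  assumes "simple_graph V E" and "k_connected 3 V E" and "card V \<ge> 4"
    and "plane_embedding V E pos \<gamma>"
    and "r0 \<in> V" and "r1 \<in> V" and "{r0, r1} \<in> E"
    and "pos r0 \<in> frontier (outer_face (drawing V E pos \<gamma>))"
    and "pos r1 \<in> frontier (outer_face (drawing V E pos \<gamma>))"
  shows "\<forall>VB EB.
    is_bridge V (E - {{r0, r1}})
      (face_boundary_vertices V pos (outer_face (drawing V (E - {{r0, r1}}) pos \<gamma>)))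
      (face_boundary_edges (E - {{r0, r1}}) \<gamma> (outer_face (drawing V (E - {{r0, r1}}) pos \<gamma>)))
      VB EB
    \<and> \<not> trivial_bridge
      (face_boundary_vertices V pos (outer_face (drawing V (E - {{r0, r1}}) pos \<gamma>)))
      (face_boundary_edges (E - {{r0, r1}}) \<gamma> (outer_face (drawing V (E - {{r0, r1}}) pos \<gamma>)))
      VB EB
    \<longrightarrow> card (attachments V (E - {{r0, r1}}) VB EB) \<ge> 3"
  proof (intro allI impI)
  fix VB EB
  assume H: "is_bridge V (E - {{r0, r1}})
      (face_boundary_vertices V pos (outer_face (drawing V (E - {{r0, r1}}) pos \<gamma>)))
      (face_boundary_edges (E - {{r0, r1}}) \<gamma> (outer_face (drawing V (E - {{r0, r1}}) pos \<gamma>)))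
      VB EB
    \<and> \<not> trivial_bridge
      (face_boundary_vertices V pos (outer_face (drawing V (E - {{r0, r1}}) pos \<gamma>)))
      (face_boundary_edges (E - {{r0, r1}}) \<gamma> (outer_face (drawing V (E - {{r0, r1}}) pos \<gamma>)))
      VB EB"
  show "card (attachments V (E - {{r0, r1}}) VB EB) \<ge> 3"
    by (rule claim2_main[OF assms refl refl refl refl conjunct1[OF H] conjunct2[OF H]])
qed

end
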